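(* Let $d\in\mathbb{N}$ with $d\ge1$ and $\mathbf d\in\mathbb{N}^2\setminus\{(0,0)\}$. Every $\alpha\in E_d\setminus\{0\}$ admits a representation $\mathbf i=(i_1,\dots,i_s)$ with $d(\mathbf i)\le d$, $s=s_d(\alpha)$ and $i_s\le i_1+2$. Similarly, every $\alpha\in E_{\mathbf d}\setminus\{0\}$ admits a representation $\mathbf i=(i_1,\dots,i_s)$ with $(d_1(\mathbf i),d_2(\mathbf i))\le\mathbf d$ (componentwise), $s=s_{\mathbf d}(\alpha)$ and $i_s\le i_1+2$.
   Context: Let $f\colon\mathbb{Z}\to\mathbb{Z}$ be defined by $f(0)=f(1)=1$, $f(i+2)=f(i+1)+f(i)$ for all $i\in\mathbb{Z}$; $\gamma=(1+\sqrt5)/2$; $\mathbb{Z}[\gamma]=\mathbb{Z}\oplus\mathbb{Z}\gamma^{-1}$. A representation of $\alpha\in\mathbb{Z}[\gamma]$ is a finite non-decreasing sequence $\mathbf i=(i_1,\dots,i_s)$ of non-negative integers with $\alpha=\sum_k\gamma^{-i_k}$ (empty sum $=0$); $d(\mathbf i)=\sum_kf(i_k)$, $d_1(\mathbf i)=\sum_kf(i_k-2)$, $d_2(\mathbf i)=\sum_kf(i_k-1)$. $E_d$ is the set of $\alpha$ having a representation $\mathbf i$ with $d(\mathbf i)\le d$, and $s_d(\alpha)$ the largest size $s$ of such a representation; $E_{\mathbf d}$ is the set of $\alpha$ having a representation with $(d_1(\mathbf i),d_2(\mathbf i))\le\mathbf d$ componentwise, and $s_{\mathbf d}(\alpha)$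 the largest size of such a representation. *)

theory Defs
  imports Complex_Main
begin

function fibZ :: "int \<Rightarrow> int" where
  "fibZ i = (if i = 0 \<or> i = 1 then 1
             else if i \<ge> 2 then fibZ (i - 1) + fibZ (i - 2)
             else fibZ (i + 2) - fibZ (i + 1))"
  by auto
termination
  by (relation "measure (\<lambda>i. if i \<ge> 1 then nat i else nat (1 - i))") auto

definition gold :: real where
  "gold = (1 + sqrt 5) / 2"

definition is_rep :: "nat list \<Rightarrow> real \<Rightarrow> bool" where
  "is_rep is \<alpha> \<longleftrightarrow> sorted is \<and> \<alpha> = (\<Sum>i\<leftarrow>is. inverse gold ^ i)"

definition dd :: "nat list \<Rightarrow> int" where
  "dd is = (\<Sum>i\<leftarrow>is. fibZ (int i))"

definition dd1 :: "nat list \<Rightarrow> int" where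
  "dd1 is = (\<Sum>i\<leftarrow>is. fibZ (int i - 2))"

definition dd2 :: "nat list \<Rightarrow> int" where
  "dd2 is = (\<Sum>i\<leftarrow>is. fibZ (int i - 1))"

definition E :: "nat \<Rightarrow> real set" where
  "E d = {\<alpha>. \<exists>is. is_rep is \<alpha> \<and> dd is \<le> int d}"

definition s_of :: "nat \<Rightarrow> real \<Rightarrow> nat" where
  "s_of d \<alpha> = Max {length is | is. is_rep is \<alpha> \<and> dd is \<le> int d}"

definition E2 :: "nat \<times> nat \<Rightarrow> real set" where
  "E2 D = {\<alpha>. \<exists>is. is_rep is \<alpha> \<and> dd1 is \<le> int (fst D) \<and> dd2 is \<le> int (snd D)}"

definition s2_of :: "nat \<times> nat \<Rightarrow> real \<Rightarrow> nat" where
  "s2_of D \<alpha> = Max {length is | is. is_rep is \<alpha> \<and> dd1 is \<le> int (fst D) \<and> dd2 is \<le> int (snd D)}"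

end

theory Submission imports Defs "HOL-Library.Multiset" begin

declare fibZ.simps[simp del]

lemma fib_rec: "fibZ (n + 2) = fibZ (n + 1) + fibZ n"
proof (cases "n \<ge> 0")
  case True
  have "fibZ (n+2) = (if n+2 = 0 \<or> n+2 = 1 then 1 else if n+2 \<ge> 2 then fibZ (n+2 - 1) + fibZ (n+2 - 2)
             else fibZ (n+2 + 2) - fibZ (n+2 + 1))" by (rule fibZ.simps)
  with True show ?thesis by (simp add: add.commute)
next
  case False
  have "fibZ n = (if n = 0 \<or> n = 1 then 1 else if n \<ge> 2 then fibZ (n - 1) + fibZ (n - 2)
             else fibZ (n + 2) - fibZ (n + 1))" by (rule fibZ.simps)
  with False show ?thesis by simp
qed

lemma fib_pos_nat: "fibZ (int n) \<ge> 1 \<and> fibZ (int n + 1) \<ge> 1"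
proof (induction n)
  case 0
  have "fibZ 0 = 1" "fibZ 1 = 1" by (subst fibZ.simps; simp)+
  then show ?case by simp
next
  case (Suc n)
  have "fibZ (int n + 2) = fibZ (int n + 1) + fibZ (int n)" by (rule fib_rec)
  then have "fibZ (int n + 2) \<ge> 1" using Suc by simp
  moreover have "int (Suc n) = int n + 1" "int (Suc n) + 1 = int n + 2" by simp_all
  ultimately show ?case using Suc by (simp only:)
qed

lemma fib_pos: "n \<ge> 0 \<Longrightarrow> fibZ n \<ge> 1"
  using fib_pos_nat[of "nat n"] by simp

lemma fib_m1: "fibZ (-1) = 0"
proof -
  have "fibZ (-1) = fibZ 1 - fibZ 0" by (subst fibZ.simps) simp
  moreover have "fibZ 0 = 1" "fibZ 1 = 1" by (subst fibZ.simps; simp)+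
  ultimately show ?thesis by simp
qed

lemma fib_m2: "fibZ (-2) = 1"
proof -
  have "fibZ (-2) = fibZ 0 - fibZ (-1)" by (subst fibZ.simps) simp
  moreover have "fibZ 0 = 1" by (subst fibZ.simps; simp)
  ultimately show ?thesis using fib_m1 by simp
qed

lemma fib_nonneg: "n \<ge> -2 \<Longrightarrow> fibZ n \<ge> 0"
proof -
  assume "n \<ge> -2"
  then consider "n = -2" | "n = -1" | "n \<ge> 0" by linarith
  then show ?thesis using fib_m1 fib_m2 fib_pos by (cases; force)
qed

definition u :: real where "u = inverse gold"

lemma u_rec: "u ^ i = u ^ (i+1) + u ^ (i+2)"
proof -
  have g: "gold ^ 2 = gold + 1" unfolding gold_def by (simp add: power2_eq_square field_simps)
  have gp: "gold > 0" unfolding gold_def by (simp add: add_pos_nonneg)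
  have "u + u^2 = 1" unfolding u_def using g gp
    by (simp add: power2_eq_square field_simps)
  then have "u^i * (u + u^2) = u^i" by simp
  then show ?thesis by (simp add: algebra_simps power_add power2_eq_square)
qed

lemma u2: "u^2 = 1 - u" using u_rec[of 0] by (simp add: power2_eq_square)
lemma u3: "u^3 = 2*u - 1"
proof -
  have "u^3 = u * u^2" by (simp add: power3_eq_cube power2_eq_square)
  also have "... = u * (1 - u)" by (simp add: u2)
  also have "... = u - u^2" by (simp add: algebra_simps power2_eq_square)
  finally show ?thesis using u2 by simp
qed
lemma u4: "u^4 = 2 - 3*u"
proof -
  have "u^4 = u * u^3" by (simp add: power4_eq_xxxx power3_eq_cube)
  also have "... = 2*u^2 - u" by (simp add: u3 algebra_simps power2_eq_square)
  finally show ?thesis using u2 by simp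
qed

definition V :: "nat list \<Rightarrow> real" where "V xs = (\<Sum>i\<leftarrow>xs. u ^ i)"
definition cost :: "int \<Rightarrow> nat list \<Rightarrow> int" where "cost c xs = (\<Sum>i\<leftarrow>xs. fibZ (int i + c))"

lemma lin4: fixes f :: "int \<Rightarrow> int" and S T :: int and P :: bool
  assumes "S + 2 * f (n + 3) = f (n + 3) + f m"
   "T = 2 * f (n + 2) + S" "(if P then 2 * f n else 0) = 0"
   "f (n + 2) = f (n + 1) + f n"
   "f (n + 3) = f (n + 2) + f (n + 1)"
 shows "T + (if P then 2 * f n else 0) = f n + f m"
  using assms by linarith

lemma pair: "3 \<le> k \<Longrightarrow> \<exists>S. V S = u^a + u^(a+k) \<and> 2 \<le> length S \<and> (4 \<le> k \<longrightarrow> 3 \<le> length S) \<and>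
   (\<forall>c. cost c S + (if odd k then 2 * fibZ (int a + c) else 0) = fibZ (int a + c) + fibZ (int a + int k + c))"
proof (induction k arbitrary: a rule: less_induct)
  case (less k)
  have r: "\<And>n. fibZ (n + 2) = fibZ (n + 1) + fibZ n" by (rule fib_rec)
  have r3: "\<And>n. fibZ (n + 3) = fibZ (n + 2) + fibZ (n + 1)" using fib_rec[of "_ + 1"] by (simp add: add.assoc)
  have r4: "\<And>n. fibZ (n + 4) = fibZ (n + 3) + fibZ (n + 2)" using fib_rec[of "_ + 2"] by (simp add: add.assoc)
  have ur: "\<And>i. u ^ i = u ^ (i+1) + u ^ (i+2)" by (rule u_rec)
  have "k = 3 \<or> k = 4 \<or> (k \<ge> 5 \<and> odd k) \<or> (k \<ge> 6 \<and> even k)"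
    using less.prems by (cases "odd k"; simp; presburger)
  then consider "k = 3" | "k = 4" | "k \<ge> 5" "odd k" | "k \<ge> 6" "even k" by blast
  then show ?case
  proof cases
    case 1
    let ?S = "[a+1, a+1]"
    have V: "V ?S = u^a + u^(a+k)" unfolding V_def using 1 by (simp add: power_add u2 u3 algebra_simps)
    have C: "cost c ?S + (if odd k then 2 * fibZ (int a + c) else 0) = fibZ (int a + c) + fibZ (int a + int k + c)" for c
    proof -
      have "cost c ?S = 2 * fibZ (int a + c + 1)" unfolding cost_def by (simp add: algebra_simps)
      moreover have "fibZ (int a + int k + c) = fibZ (int a + c + 3)" using 1 by (simp add: algebra_simps)
      ultimately show ?thesis using 1 r3[of "int a + c"] r[of "int a + c"] by simp
    qed
    have L: "2 \<le> length ?S" "4 \<le> k \<longrightarrow> 3 \<le> length ?S" using 1 by simp_all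
    show ?thesis by (intro exI[of _ ?S] conjI allI) (fact V L(1) L(2) C)+
  next
    case 2
    let ?S = "[a+2, a+2, a+2]"
    have "u^a + u^(a+k) = u^a * (1 + u^4)" using 2 by (simp add: power_add algebra_simps)
    also have "... = 3 * (u^a * u^2)" by (simp add: u4 u2 algebra_simps)
    also have "... = V ?S" by (simp add: V_def power_add power2_eq_square)
    finally have V: "V ?S = u^a + u^(a+k)" by simp
    have C: "cost c ?S + (if odd k then 2 * fibZ (int a + c) else 0) = fibZ (int a + c) + fibZ (int a + int k + c)" for c
    proof -
      have "cost c ?S = 3 * fibZ (int a + c + 2)" unfolding cost_def by (simp add: algebra_simps)
      moreover have "fibZ (int a + int k + c) = fibZ (int a + c + 4)" using 2 by (simp add: algebra_simps)
      ultimately show ?thesis using 2 r4[of "int a + c"] r3[of "int a + c"] r[of "int a + c"] by simp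
    qed
    have L: "2 \<le> length ?S" "4 \<le> k \<longrightarrow> 3 \<le> length ?S" by simp_all
    show ?thesis by (intro exI[of _ ?S] conjI allI) (fact V L(1) L(2) C)+
  next
    case 3
    have "\<exists>S. V S = u^(a+2) + u^(a+2+(k-2)) \<and> 2 \<le> length S \<and> (4 \<le> k-2 \<longrightarrow> 3 \<le> length S) \<and>
      (\<forall>c. cost c S + (if odd (k-2) then 2 * fibZ (int (a+2) + c) else 0) = fibZ (int (a+2) + c) + fibZ (int (a+2) + int (k-2) + c))"
      by (rule less.IH) (use 3 in auto)
    then obtain S where S: "V S = u^(a+2) + u^(a+2+(k-2))" "2 \<le> length S"
      "\<forall>c. cost c S + (if odd (k-2) then 2 * fibZ (int (a+2) + c) else 0) = fibZ (int (a+2) + c) + fibZ (int (a+2) + int (k-2) + c)"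
      by (elim exE conjE) (intro that)
    let ?S = "(a+1) # S"
    have e: "a+2+(k-2) = a+k" using 3 by simp
    have "V ?S = u^(a+1) + V S" by (simp add: V_def)
    also have "... = u^(a+1) + u^(a+2) + u^(a+k)" unfolding S(1) e by (simp only: add.assoc)
    also have "u^(a+1) + u^(a+2) = u^a"
    proof -
      have "u^(a+1) + u^(a+2) = u^a * (u + u^2)" by (simp add: power_add algebra_simps power2_eq_square power3_eq_cube)
      also have "... = u^a" by (simp add: u2)
      finally show ?thesis .
    qed
    finally have V: "V ?S = u^a + u^(a+k)" .
    have C: "cost c ?S + (if odd k then 2 * fibZ (int a + c) else 0) = fibZ (int a + c) + fibZ (int a + int k + c)" for c
    proof -
      have o: "odd (k-2)" using 3 by simp
      have e1: "int (a+2) + c = int a + c + 2" by simp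
      have e2: "int (a+2) + int (k-2) + c = int a + int k + c" using 3 by simp
      have "cost c S + 2 * fibZ (int (a+2) + c) = fibZ (int (a+2) + c) + fibZ (int (a+2) + int (k-2) + c)"
        using spec[OF S(3), of c] by (simp only: if_P[OF o])
      then have "cost c S + 2 * fibZ (int a + c + 2) = fibZ (int a + c + 2) + fibZ (int a + int k + c)"
        unfolding e1 e2 .
      moreover have "cost c ?S = fibZ (int a + c + 1) + cost c S" unfolding cost_def by (simp add: algebra_simps)
      moreover have "(if odd k then 2 * fibZ (int a + c) else 0) = 2 * fibZ (int a + c)" using 3 by simp
      ultimately show ?thesis using r[of "int a + c"] by linarith
    qed
    have L: "2 \<le> length ?S" "4 \<le> k \<longrightarrow> 3 \<le> length ?S" using S(2) by simp_all
    show ?thesis by (intro exI[of _ ?S] conjI allI) (fact V L(1) L(2) C)+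
  next
    case 4
    have "\<exists>S. V S = u^(a+3) + u^(a+3+(k-3)) \<and> 2 \<le> length S \<and> (4 \<le> k-3 \<longrightarrow> 3 \<le> length S) \<and>
      (\<forall>c. cost c S + (if odd (k-3) then 2 * fibZ (int (a+3) + c) else 0) = fibZ (int (a+3) + c) + fibZ (int (a+3) + int (k-3) + c))"
      by (rule less.IH) (use 4 in auto)
    then obtain S where S: "V S = u^(a+3) + u^(a+3+(k-3))" "2 \<le> length S"
      "\<forall>c. cost c S + (if odd (k-3) then 2 * fibZ (int (a+3) + c) else 0) = fibZ (int (a+3) + c) + fibZ (int (a+3) + int (k-3) + c)"
      by (elim exE conjE) (intro that)
    let ?S = "(a+2) # (a+2) # S"
    have e: "a+3+(k-3) = a+k" using 4 by simp
    have "V ?S = 2 * u^(a+2) + V S" by (simp add: V_def)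
    also have "... = 2 * u^(a+2) + u^(a+3) + u^(a+k)" unfolding S(1) e by (simp only: add.assoc)
    also have "2 * u^(a+2) + u^(a+3) = u^a"
    proof -
      have "2 * u^(a+2) + u^(a+3) = u^a * (2 * u^2 + u^3)" by (simp add: power_add algebra_simps power2_eq_square power3_eq_cube)
      also have "... = u^a" by (simp add: u2 u3)
      finally show ?thesis .
    qed
    finally have V: "V ?S = u^a + u^(a+k)" .
    have C: "cost c ?S + (if odd k then 2 * fibZ (int a + c) else 0) = fibZ (int a + c) + fibZ (int a + int k + c)" for c
    proof -
      have o: "odd (k-3)" using 4 by presburger
      have e1: "int (a+3) + c = int a + c + 3" by simp
      have e2: "int (a+3) + int (k-3) + c = int a + int k + c" using 4 by simp
      have "cost c S + 2 * fibZ (int (a+3) + c) = fibZ (int (a+3) + c) + fibZ (int (a+3) + int (k-3) + c)"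
        using spec[OF S(3), of c] by (simp only: if_P[OF o])
      then have "cost c S + 2 * fibZ (int a + c + 3) = fibZ (int a + c + 3) + fibZ (int a + int k + c)"
        unfolding e1 e2 .
      moreover have "cost c ?S = 2 * fibZ (int a + c + 2) + cost c S" unfolding cost_def by (simp add: algebra_simps)
      moreover have "(if odd k then 2 * fibZ (int a + c) else 0) = 0" using 4 by simp
      ultimately show ?thesis using r[of "int a + c"] r3[of "int a + c"] by (rule lin4)
    qed
    have L: "2 \<le> length ?S" "4 \<le> k \<longrightarrow> 3 \<le> length ?S" using S(2) by simp_all
    show ?thesis by (intro exI[of _ ?S] conjI allI) (fact V L(1) L(2) C)+
  qed
qed



lemma sum_sort: fixes g :: "'a::linorder \<Rightarrow> 'b::comm_monoid_add" shows "sum_list (map g (sort xs)) = sum_list (map g xs)"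
proof -
  have "mset (map g (sort xs)) = mset (map g xs)" by simp
  then show ?thesis by (metis sum_mset_sum_list)
qed

lemma V_sort: "V (sort xs) = V xs" unfolding V_def by (rule sum_sort)
lemma cost_sort: "cost c (sort xs) = cost c xs" unfolding cost_def by (rule sum_sort)

lemma sum_rem2:
  fixes g :: "'a \<Rightarrow> 'b::comm_monoid_add"
  assumes "x \<in> set xs" "y \<in> set xs" "x \<noteq> y"
  shows "sum_list (map g xs) = g y + g x + sum_list (map g (remove1 x (remove1 y xs)))"
proof -
  have "x \<in> set (remove1 y xs)" using assms by (simp add: in_set_remove1)
  then have "sum_list (map g (remove1 y xs)) = g x + sum_list (map g (remove1 x (remove1 y xs)))"
    by (rule sum_list_map_remove1)
  moreover have "sum_list (map g xs) = g y + sum_list (map g (remove1 y xs))"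
    using assms(2) by (rule sum_list_map_remove1)
  ultimately show ?thesis by (simp add: add.assoc)
qed

lemma main_gen:
  fixes Adm :: "nat list \<Rightarrow> bool" and N :: nat
  assumes mono: "\<And>xs ys. Adm xs \<Longrightarrow> cost (-2) ys \<le> cost (-2) xs \<Longrightarrow> cost (-1) ys \<le> cost (-1) xs \<Longrightarrow> Adm ys"
    and bound: "\<And>xs. Adm xs \<Longrightarrow> length xs \<le> N"
    and ex: "V xs0 = \<alpha>" "Adm xs0" "xs0 \<noteq> []"
  shows "\<exists>ys. sorted ys \<and> V ys = \<alpha> \<and> Adm ys \<and> length ys = Max {length is | is. sorted is \<and> V is = \<alpha> \<and> Adm is}
          \<and> ys \<noteq> [] \<and> last ys \<le> hd ys + 2"
proof -
  let ?L = "{length is | is. sorted is \<and> V is = \<alpha> \<and> Adm is}"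
  define s where "s = Max ?L"
  have admsort: "Adm (sort ys)" if "Adm ys" for ys
    using mono[OF that] cost_sort by simp
  have fin: "finite ?L"
    by (rule finite_subset[of _ "{..N}"]) (auto dest: bound)
  have inL: "length ys \<in> ?L" if "V ys = \<alpha>" "Adm ys" for ys
  proof -
    have "sorted (sort ys) \<and> V (sort ys) = \<alpha> \<and> Adm (sort ys)" using that admsort V_sort by simp
    then show ?thesis by (metis (mono_tags, lifting) length_sort mem_Collect_eq)
  qed
  have Lmax: "length ys \<le> s" if "V ys = \<alpha>" "Adm ys" for ys
    unfolding s_def using fin inL[OF that] by (rule Max_ge)
  have "s \<in> ?L" unfolding s_def using fin inL[OF ex(1,2)] by (intro Max_in) auto
  then obtain xs1 where xs1: "V xs1 = \<alpha>" "Adm xs1" "length xs1 = s" by auto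
  have "\<exists>xs. (V xs = \<alpha> \<and> Adm xs \<and> length xs = s) \<and> (\<forall>ys. (V ys = \<alpha> \<and> Adm ys \<and> length ys = s) \<longrightarrow> sum_list xs \<le> sum_list ys)"
    using xs1 by (intro ex_has_least_nat[where m = sum_list]) auto
  then obtain xs where xs: "V xs = \<alpha>" "Adm xs" "length xs = s"
    and least: "\<And>ys. V ys = \<alpha> \<Longrightarrow> Adm ys \<Longrightarrow> length ys = s \<Longrightarrow> sum_list xs \<le> sum_list ys" by blast
  have close: "y \<le> x + 2" if xy: "x \<in> set xs" "y \<in> set xs" for x y
  proof (rule ccontr)
    assume "\<not> y \<le> x + 2"
    then obtain k where k: "y = x + k" "3 \<le> k" by (intro that[of "y - x"]) auto
    have ne: "x \<noteq> y" using k by simp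
    define rest where "rest = remove1 x (remove1 y xs)"
    have Vxs: "V xs = u^y + u^x + V rest" unfolding V_def rest_def by (rule sum_rem2[OF xy ne])
    have cxs: "cost c xs = fibZ (int y + c) + fibZ (int x + c) + cost c rest" for c
      unfolding cost_def rest_def by (rule sum_rem2[OF xy ne, where g = "\<lambda>i. fibZ (int i + c)"])
    have l1: "length (remove1 y xs) = length xs - 1" using xy(2) by (simp add: length_remove1)
    have xr: "x \<in> set (remove1 y xs)" using xy ne by simp
    have l2: "length rest = length (remove1 y xs) - 1" unfolding rest_def using xr by (simp add: length_remove1)
    have "0 < length (remove1 y xs)" using xr by (rule length_pos_if_in_set)
    then have lr: "length rest + 2 = length xs" using l1 l2 by linarith
    have fnn: "0 \<le> fibZ (int x + c)" if "c \<ge> -2" for c using that fib_nonneg by simp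
    show False
    proof (cases "k = 3")
      case True
      define ys where "ys = (x+1) # (x+1) # rest"
      have "V ys = 2 * u^(x+1) + V rest" unfolding ys_def V_def by simp
      also have "2 * u^(x+1) = u^x + u^y"
      proof -
        have "2 * u^(x+1) = u^x * (2*u)" by (simp add: power_add)
        also have "... = u^x * (1 + u^3)" by (simp add: u3)
        also have "... = u^x + u^y" using k True by (simp add: power_add algebra_simps)
        finally show ?thesis .
      qed
      finally have Vys: "V ys = \<alpha>" using Vxs xs(1) by simp
      have cys: "cost c ys + 2 * fibZ (int x + c) = cost c xs" for c
      proof -
        have "cost c ys = 2 * fibZ (int x + c + 1) + cost c rest" unfolding ys_def cost_def by (simp add: algebra_simps)
        moreover have "fibZ (int y + c) = fibZ (int x + c + 3)" using k True by (simp add: algebra_simps)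
        moreover have "fibZ (int x + c + 3) = fibZ (int x + c + 2) + fibZ (int x + c + 1)"
          using fib_rec[of "int x + c + 1"] by (simp add: add.assoc)
        moreover have "fibZ (int x + c + 2) = fibZ (int x + c + 1) + fibZ (int x + c)" by (rule fib_rec)
        ultimately show ?thesis using cxs[of c] by linarith
      qed
      have f2: "0 \<le> fibZ (int x + -2)" "0 \<le> fibZ (int x + -1)" using fnn[of "-2"] fnn[of "-1"] by simp_all
      have "Adm ys" by (rule mono[OF xs(2)]) (use cys[of "-2"] cys[of "-1"] f2 in linarith)+
      moreover have "length ys = s" using lr xs(3) unfolding ys_def by simp
      ultimately have "sum_list xs \<le> sum_list ys" using least Vys by blast
      moreover have "sum_list xs = y + x + sum_list rest" using sum_rem2[OF xy ne, of id] unfolding rest_def by simp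
      moreover have "sum_list ys = 2 * x + 2 + sum_list rest" unfolding ys_def by simp
      ultimately show False using k True by simp
    next
      case False
      obtain S where S: "V S = u^x + u^(x+k)" "3 \<le> length S"
        "\<forall>c. cost c S + (if odd k then 2 * fibZ (int x + c) else 0) = fibZ (int x + c) + fibZ (int x + int k + c)"
        using pair[of k x] k False by auto
      define ys where "ys = S @ rest"
      have "V ys = \<alpha>" unfolding ys_def using S(1) Vxs xs(1) k by (simp add: V_def)
      moreover have "cost c ys \<le> cost c xs" if "c \<ge> -2" for c
      proof -
        have "cost c ys = cost c S + cost c rest" unfolding ys_def cost_def by simp
        moreover have "(if odd k then 2 * fibZ (int x + c) else 0) \<ge> 0" using fnn[OF that] by simp
        moreover have "int x + int k + c = int y + c" using k by simp
        ultimately show ?thesis using spec[OF S(3), of c] cxs[of c] by simp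
      qed
      ultimately have "Adm ys" "V ys = \<alpha>" using mono[OF xs(2)] by auto
      then have "length ys \<le> s" by (rule Lmax[rotated])
      moreover have "length ys = length S + length rest" unfolding ys_def by simp
      ultimately show False using S(2) lr xs(3) by simp
    qed
  qed
  have "length xs0 \<le> s" using Lmax ex by simp
  then have "xs \<noteq> []" using xs(3) ex(3) by auto
  then have "sort xs \<noteq> []" by (metis length_sort length_0_conv)
  moreover have "last (sort xs) \<le> hd (sort xs) + 2"
  proof -
    have "last (sort xs) \<in> set xs" "hd (sort xs) \<in> set xs" using \<open>sort xs \<noteq> []\<close>
      by (metis last_in_set set_sort, metis hd_in_set set_sort)
    then show ?thesis using close by blast
  qed
  ultimately show ?thesis using xs admsort V_sort s_def
    by (intro exI[of _ "sort xs"]) auto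
qed


lemma rep_iff: "is_rep xs \<alpha> \<longleftrightarrow> sorted xs \<and> V xs = \<alpha>"
  unfolding is_rep_def V_def u_def by auto

lemma fib_split: "fibZ n = fibZ (n + -2) + fibZ (n + -1)"
  using fib_rec[of "n - 2"] by simp

lemma dd_split: "dd xs = cost (-2) xs + cost (-1) xs"
proof (induction xs)
  case Nil
  then show ?case by (simp add: dd_def cost_def)
next
  case (Cons a xs)
  then show ?case using fib_split[of "int a"] by (simp add: dd_def cost_def)
qed

lemma dd1_eq: "dd1 xs = cost (-2) xs" unfolding dd1_def cost_def by simp
lemma dd2_eq: "dd2 xs = cost (-1) xs" unfolding dd2_def cost_def by simp

lemma len_dd: "int (length xs) \<le> dd xs"
proof (induction xs)
  case Nil
  then show ?case by (simp add: dd_def)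
next
  case (Cons a xs)
  then show ?case using fib_pos[of "int a"] by (simp add: dd_def)
qed

lemma len_dd12: "int (length xs) \<le> dd1 xs + dd2 xs"
  using len_dd[of xs] dd_split[of xs] dd1_eq dd2_eq by simp

theorem mainTheorem15:
  fixes d :: nat and D :: "nat \<times> nat"
  assumes "d \<ge> 1" and "D \<noteq> (0, 0)"
  shows "(\<forall>\<alpha>\<in>E d - {0}. \<exists>is. is_rep is \<alpha> \<and> dd is \<le> int d \<and> length is = s_of d \<alpha>
             \<and> is \<noteq> [] \<and> last is \<le> hd is + 2)
       \<and> (\<forall>\<alpha>\<in>E2 D - {0}. \<exists>is. is_rep is \<alpha> \<and> dd1 is \<le> int (fst D) \<and> dd2 is \<le> int (snd D)
             \<and> length is = s2_of D \<alpha> \<and> is \<noteq> [] \<and> last is \<le> hd is + 2)"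
proof (intro conjI ballI)
  fix \<alpha> assume "\<alpha> \<in> E d - {0}"
  then obtain is0 where i0: "is_rep is0 \<alpha>" "dd is0 \<le> int d" and a0: "\<alpha> \<noteq> 0" unfolding E_def by auto
  then have ne: "is0 \<noteq> []" by (auto simp: is_rep_def)
  have "\<exists>ys. sorted ys \<and> V ys = \<alpha> \<and> dd ys \<le> int d \<and> length ys = Max {length is | is. sorted is \<and> V is = \<alpha> \<and> dd is \<le> int d}
          \<and> ys \<noteq> [] \<and> last ys \<le> hd ys + 2"
  proof (rule main_gen[where Adm = "\<lambda>xs. dd xs \<le> int d" and N = d])
    show "dd ys \<le> int d" if "dd xs \<le> int d" "cost (-2) ys \<le> cost (-2) xs" "cost (-1) ys \<le> cost (-1) xs" for xs ys
      using that dd_split[of xs] dd_split[of ys] by linarith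
    show "length xs \<le> d" if "dd xs \<le> int d" for xs using that len_dd[of xs] by linarith
    show "V is0 = \<alpha>" using i0 rep_iff by blast
    show "dd is0 \<le> int d" by (rule i0(2))
    show "is0 \<noteq> []" by (rule ne)
  qed
  then show "\<exists>is. is_rep is \<alpha> \<and> dd is \<le> int d \<and> length is = s_of d \<alpha> \<and> is \<noteq> [] \<and> last is \<le> hd is + 2"
    unfolding s_of_def rep_iff by auto
next
  fix \<alpha> assume "\<alpha> \<in> E2 D - {0}"
  then obtain is0 where i0: "is_rep is0 \<alpha>" "dd1 is0 \<le> int (fst D) \<and> dd2 is0 \<le> int (snd D)" and a0: "\<alpha> \<noteq> 0"
    unfolding E2_def by auto
  then have ne: "is0 \<noteq> []" by (auto simp: is_rep_def)
  have "\<exists>ys. sorted ys \<and> V ys = \<alpha> \<and> (dd1 ys \<le> int (fst D) \<and> dd2 ys \<le> int (snd D)) \<and>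
     length ys = Max {length is | is. sorted is \<and> V is = \<alpha> \<and> (dd1 is \<le> int (fst D) \<and> dd2 is \<le> int (snd D))}
          \<and> ys \<noteq> [] \<and> last ys \<le> hd ys + 2"
  proof (rule main_gen[where Adm = "\<lambda>xs. dd1 xs \<le> int (fst D) \<and> dd2 xs \<le> int (snd D)" and N = "fst D + snd D"])
    show "dd1 ys \<le> int (fst D) \<and> dd2 ys \<le> int (snd D)"
      if "dd1 xs \<le> int (fst D) \<and> dd2 xs \<le> int (snd D)" "cost (-2) ys \<le> cost (-2) xs" "cost (-1) ys \<le> cost (-1) xs" for xs ys
      using that dd1_eq[of xs] dd1_eq[of ys] dd2_eq[of xs] dd2_eq[of ys] by linarith
    show "length xs \<le> fst D + snd D" if "dd1 xs \<le> int (fst D) \<and> dd2 xs \<le> int (snd D)" for xs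
      using that len_dd12[of xs] by linarith
    show "V is0 = \<alpha>" using i0 rep_iff by blast
    show "dd1 is0 \<le> int (fst D) \<and> dd2 is0 \<le> int (snd D)" by (rule i0(2))
    show "is0 \<noteq> []" by (rule ne)
  qed
  then show "\<exists>is. is_rep is \<alpha> \<and> dd1 is \<le> int (fst D) \<and> dd2 is \<le> int (snd D)
             \<and> length is = s2_of D \<alpha> \<and> is \<noteq> [] \<and> last is \<le> hd is + 2"
    unfolding s2_of_def rep_iff by auto
qed

end
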